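(* Let $\bar P=\prod_{x\in\mathbb Z}\bar P_x$ be a product probability measure on $\Omega=\mathbb R^{\mathbb Z}$ and suppose the law $\bar P_0$ of $\omega_0$ is symmetric ($\omega_0$ and $-\omega_0$ have the same distribution). Then for every $n\ge0$ and $x\in\mathbb Z$, $$\mathbb P_n(X_n=x)=P^{\mathbf 0}_n(X_n=x),$$ where $\mathbb P_n(X_n=x)=\int_\Omega P^{\omega}_n(X_n=x)\,\bar P(d\omega)$ and $P^{\mathbf 0}_n$ is the quenched law for $\omega\equiv0$ (the Hadamard walk started from $\varphi_*$).
   Context: $U_x=\frac{1}{\sqrt2}\begin{pmatrix} e^{i\omega_x} & 1\\ 1 & -e^{-i\omega_x}\end{pmatrix}=\begin{pmatrix} a_x & b_x\\ c_x & d_x\end{pmatrix}$, $P_x=\begin{pmatrix} a_x & b_x\\ 0&0\end{pmatrix}$, $Q_x=\begin{pmatrix} 0&0\\ c_x & d_x\end{pmatrix}$. $\Xi_0(0,0)=I$, $\Xi_n(l,m)=0$ if $l<0$ or $m<0$, and $\Xi_{n+1}(l,m)=P_{x+1}\Xi_n(l-1,m)+Q_{x-1}\Xi_n(l,m-1)$ for $l,m\ge0$, $l+m=n+1$, $x=-l+m$. With $\varphi_*={}^T[1/\sqrt2,i/\sqrt2]$, $P^{\omega}_n(X_n=x)=\|\Xi_n(l,m)\varphi_*\|^2$ for $x=-l+m$, $n=l+m$, $l,m\ge0$ (zero otherwise). *)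

theory Defs
  imports "HOL-Probability.Probability"
begin

text \<open>2x2 complex matrices are represented as complex^2^2 (HOL-Analysis), with index 1 the
first and index 2 the second row/column. The environment is \<omega> :: int \<Rightarrow> real.\<close>

definition mat2 :: "complex \<Rightarrow> complex \<Rightarrow> complex \<Rightarrow> complex \<Rightarrow> complex^2^2" where
  "mat2 a b c d = (\<chi> i j. if i = 1 then (if j = 1 then a else b) else (if j = 1 then c else d))"

definition vec2 :: "complex \<Rightarrow> complex \<Rightarrow> complex^2" where
  "vec2 a b = (\<chi> i. if i = 1 then a else b)"

definition Ucoin :: "(int \<Rightarrow> real) \<Rightarrow> int \<Rightarrow> complex^2^2" where
  "Ucoin \<omega> x = mat2 (cis (\<omega> x) / sqrt 2) (1 / sqrt 2) (1 / sqrt 2) (- cis (- \<omega> x) / sqrt 2)"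

definition Pmat :: "(int \<Rightarrow> real) \<Rightarrow> int \<Rightarrow> complex^2^2" where
  "Pmat \<omega> x = mat2 (Ucoin \<omega> x $ 1 $ 1) (Ucoin \<omega> x $ 1 $ 2) 0 0"

definition Qmat :: "(int \<Rightarrow> real) \<Rightarrow> int \<Rightarrow> complex^2^2" where
  "Qmat \<omega> x = mat2 0 0 (Ucoin \<omega> x $ 2 $ 1) (Ucoin \<omega> x $ 2 $ 2)"

text \<open>Xi \<omega> l m is \<Xi>_n(l,m) with n = l + m (only defined there), position x = -l+m.\<close>
fun Xi :: "(int \<Rightarrow> real) \<Rightarrow> nat \<Rightarrow> nat \<Rightarrow> complex^2^2" where
  "Xi \<omega> 0 0 = mat 1"
| "Xi \<omega> (Suc l) 0 = Pmat \<omega> (- int (Suc l) + 1) ** Xi \<omega> l 0"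
| "Xi \<omega> 0 (Suc m) = Qmat \<omega> (int (Suc m) - 1) ** Xi \<omega> 0 m"
| "Xi \<omega> (Suc l) (Suc m) =
     Pmat \<omega> (- int (Suc l) + int (Suc m) + 1) ** Xi \<omega> l (Suc m)
   + Qmat \<omega> (- int (Suc l) + int (Suc m) - 1) ** Xi \<omega> (Suc l) m"

definition phi_star :: "complex^2" where
  "phi_star = vec2 (1 / sqrt 2) (\<i> / sqrt 2)"

definition quenched_prob :: "(int \<Rightarrow> real) \<Rightarrow> nat \<Rightarrow> int \<Rightarrow> real" where
  "quenched_prob \<omega> n x =
     (if \<exists>l m. l + m = n \<and> x = - int l + int m
      then (norm (Xi \<omega> (nat ((int n - x) div 2)) (nat ((int n + x) div 2)) *v phi_star))\<^sup>2
      else 0)"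

end

theory Submission
  imports Defs
begin


lemma mat2_mult: "mat2 a b c d ** mat2 e f g h = mat2 (a*e+b*g) (a*f+b*h) (c*e+d*g) (c*f+d*h)"
  by (simp add: matrix_matrix_mult_def mat2_def vec_eq_iff forall_2 sum_2)

lemma mat2_add: "mat2 a b c d + mat2 e f g h = mat2 (a+e) (b+f) (c+g) (d+h)"
  by (simp add: mat2_def vec_eq_iff forall_2)

lemma mat2_eta: "(A::complex^2^2) = mat2 (A$1$1) (A$1$2) (A$2$1) (A$2$2)"
  by (simp add: mat2_def vec_eq_iff forall_2)

lemma mat2_vec: "mat2 a b c d *v vec2 x y = vec2 (a*x+b*y) (c*x+d*y)"
  by (simp add: matrix_vector_mult_def mat2_def vec2_def vec_eq_iff forall_2 sum_2)

lemma mat2_one: "mat 1 = mat2 1 0 0 1"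
  by (simp add: mat_def mat2_def vec_eq_iff forall_2)

lemma mat2_entries [simp]: "mat2 a b c d $ 1 $ 1 = a" "mat2 a b c d $ 1 $ 2 = b"
   "mat2 a b c d $ 2 $ 1 = c" "mat2 a b c d $ 2 $ 2 = d"
  by (simp_all add: mat2_def)

lemma norm_vec2: "(norm (vec2 a b))\<^sup>2 = (cmod a)\<^sup>2 + (cmod b)\<^sup>2"
  by (simp add: norm_vec_def L2_set_def sum_2 vec2_def)

definition S :: "(int \<Rightarrow> real) \<Rightarrow> int \<Rightarrow> real" where
  "S \<omega> x = (if 0 \<le> x then (\<Sum>y\<in>{1..x}. \<omega> y) else - (\<Sum>y\<in>{x+1..0}. \<omega> y))"

lemma S_step: "S \<omega> x = S \<omega> (x-1) + \<omega> x"
proof (cases "x \<ge> 1")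
  case True
  have "{1..x} = insert x {1..x-1}" using True by auto
  then show ?thesis using True by (simp add: S_def add.commute)
next
  case False
  show ?thesis
  proof (cases "x = 0")
    case True then show ?thesis by (simp add: S_def)
  next
    case False2: False
    have "{x..0} = insert x {x+1..0}" using False False2 by auto
    then show ?thesis using False False2 by (simp add: S_def)
  qed
qed

definition dg :: "complex \<Rightarrow> complex \<Rightarrow> complex^2^2" where "dg a b = mat2 a 0 0 b"
definition Dm :: "(int \<Rightarrow> real) \<Rightarrow> int \<Rightarrow> complex^2^2" where
  "Dm \<omega> x = dg (cis (- S \<omega> x)) (cis (\<omega> x - S \<omega> x))"

lemma L1: "Pmat \<omega> y ** Dm \<omega> y = Dm \<omega> (y-1) ** Pmat (\<lambda>_. 0) y"
proof -
  have e: "S \<omega> (y-1) = S \<omega> y - \<omega> y" using S_step[of \<omega> y] by simp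
  show ?thesis
    unfolding Pmat_def Ucoin_def Dm_def dg_def mat2_mult mat2_entries e
    by (simp add: cis_mult field_simps)
qed

lemma L2: "Qmat \<omega> y ** Dm \<omega> y = Dm \<omega> (y+1) ** Qmat (\<lambda>_. 0) y"
proof -
  have e: "S \<omega> (y+1) = S \<omega> y + \<omega> (y+1)" using S_step[of \<omega> "y+1"] by simp
  show ?thesis
    unfolding Qmat_def Ucoin_def Dm_def dg_def mat2_mult mat2_entries e
    by (simp add: cis_mult field_simps)
qed

lemma matrix_add_rdistrib': "((B + C) ** A) = (B ** A) + (C ** (A::complex^2^2))"
  by (vector matrix_matrix_mult_def sum.distrib[symmetric] field_simps)

lemma gauge: "Xi \<omega> l m = Dm \<omega> (- int l + int m) ** Xi (\<lambda>_. 0) l m ** dg 1 (cis (- \<omega> 0))"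
proof (induction \<omega> l m rule: Xi.induct)
  case (1 \<omega>)
  show ?case by (simp add: Dm_def dg_def S_def mat2_one mat2_mult cis_mult)
next
  case (2 \<omega> l)
  have "Xi \<omega> (Suc l) 0 = Pmat \<omega> (- int (Suc l) + 1) ** (Dm \<omega> (- int (Suc l) + 1) ** Xi (\<lambda>_. 0) l 0 ** dg 1 (cis (- \<omega> 0)))"
    using 2 by simp
  also have "\<dots> = Dm \<omega> (- int (Suc l)) ** Pmat (\<lambda>_. 0) (- int (Suc l) + 1) ** Xi (\<lambda>_. 0) l 0 ** dg 1 (cis (- \<omega> 0))"
  proof -
    have L: "Pmat \<omega> (- int (Suc l) + 1) ** Dm \<omega> (- int (Suc l) + 1) = Dm \<omega> (- int (Suc l)) ** Pmat (\<lambda>_. 0) (- int (Suc l) + 1)"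
      by (metis L1 add_diff_cancel_right')
    show ?thesis by (simp only: matrix_mul_assoc L)
  qed
  finally show ?case by (simp add: matrix_mul_assoc)
next
  case (3 \<omega> m)
  have "Xi \<omega> 0 (Suc m) = Qmat \<omega> (int (Suc m) - 1) ** (Dm \<omega> (int (Suc m) - 1) ** Xi (\<lambda>_. 0) 0 m ** dg 1 (cis (- \<omega> 0)))"
    using 3 by simp
  also have "\<dots> = Dm \<omega> (int (Suc m)) ** Qmat (\<lambda>_. 0) (int (Suc m) - 1) ** Xi (\<lambda>_. 0) 0 m ** dg 1 (cis (- \<omega> 0))"
  proof -
    have L: "Qmat \<omega> (int (Suc m) - 1) ** Dm \<omega> (int (Suc m) - 1) = Dm \<omega> (int (Suc m)) ** Qmat (\<lambda>_. 0) (int (Suc m) - 1)"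
      by (metis L2 diff_add_cancel)
    show ?thesis by (simp only: matrix_mul_assoc L)
  qed
  finally show ?case by (simp add: matrix_mul_assoc)
next
  case (4 \<omega> l m)
  let ?x = "- int (Suc l) + int (Suc m)"
  let ?G = "dg 1 (cis (- \<omega> 0))"
  have a: "- int l + int (Suc m) = ?x + 1" by simp
  have b: "- int (Suc l) + int m = ?x - 1" by simp
  have "Xi \<omega> (Suc l) (Suc m) = Pmat \<omega> (?x + 1) ** (Dm \<omega> (?x+1) ** Xi (\<lambda>_. 0) l (Suc m) ** ?G)
      + Qmat \<omega> (?x - 1) ** (Dm \<omega> (?x-1) ** Xi (\<lambda>_. 0) (Suc l) m ** ?G)"
    by (simp only: Xi.simps(4) 4[unfolded a b])
  also have "\<dots> = Dm \<omega> ?x ** Pmat (\<lambda>_. 0) (?x + 1) ** Xi (\<lambda>_. 0) l (Suc m) ** ?G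
      + Dm \<omega> ?x ** Qmat (\<lambda>_. 0) (?x - 1) ** Xi (\<lambda>_. 0) (Suc l) m ** ?G"
    by (simp only: matrix_mul_assoc L1[of \<omega> "?x + 1", unfolded add_diff_cancel_right'] L2[of \<omega> "?x - 1", unfolded diff_add_cancel])
  also have "\<dots> = Dm \<omega> ?x ** Xi (\<lambda>_. 0) (Suc l) (Suc m) ** ?G"
    by (simp add: matrix_mul_assoc matrix_add_ldistrib matrix_add_rdistrib')
  finally show ?case .
qed


lemma cm_calc: "(cmod (complex_of_real h * (1/sqrt 2) + complex_of_real k * (cis (-t) * (\<i> / sqrt 2))))\<^sup>2
   = (h^2 + k^2)/2 + h * k * sin t"
proof -
  let ?z = "complex_of_real h * (1/sqrt 2) + complex_of_real k * (cis (-t) * (\<i> / sqrt 2))"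
  have r: "Re ?z = (h + k * sin t) / sqrt 2" by (simp add: add_divide_distrib)
  have i: "Im ?z = k * cos t / sqrt 2" by simp
  have s: "(sin t)^2 + (cos t)^2 = 1" by simp
  have "(cmod ?z)^2 = ((h + k * sin t)^2 + (k * cos t)^2) / 2"
    unfolding cmod_power2 r i power_divide by (simp flip: add_divide_distrib)
  also have "(k * cos t)^2 = k^2 - (k * sin t)^2"
    using s by (simp add: power_mult_distrib algebra_simps flip: distrib_left)
  also have "((h + k * sin t)^2 + (k^2 - (k * sin t)^2)) / 2 = (h^2 + k^2)/2 + h * k * sin t"
    by (simp add: power2_sum algebra_simps)
  finally show ?thesis .
qed

lemma Pmat0_real: "Pmat (\<lambda>_. 0) y $ i $ k \<in> \<real>"
  using exhaust_2[of i] exhaust_2[of k] by (auto simp: Pmat_def Ucoin_def mat2_def)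
lemma Qmat0_real: "Qmat (\<lambda>_. 0) y $ i $ k \<in> \<real>"
  using exhaust_2[of i] exhaust_2[of k] by (auto simp: Qmat_def Ucoin_def mat2_def)

lemma mult_real: "(\<And>i k. A $ i $ k \<in> \<real>) \<Longrightarrow> (\<And>i k. B $ i $ k \<in> \<real>) \<Longrightarrow> ((A::complex^2^2) ** B) $ i $ j \<in> \<real>"
  by (simp add: matrix_matrix_mult_def sum_2 Reals_add Reals_mult)

lemma Xi0_real_aux: "\<omega> = (\<lambda>_. 0) \<Longrightarrow> Xi \<omega> l m $ i $ j \<in> \<real>"
proof (induction \<omega> l m arbitrary: i j rule: Xi.induct)
  case (1 \<omega>) then show ?case by (simp add: mat_def)
next
  case (2 \<omega> l) then show ?case by (simp add: mult_real Pmat0_real)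
next
  case (3 \<omega> m) then show ?case by (simp add: mult_real Qmat0_real)
next
  case (4 \<omega> l m) then show ?case by (simp add: mult_real Pmat0_real Qmat0_real Reals_add)
qed

lemma Xi0_real: "Xi (\<lambda>_. 0) l m $ i $ j = complex_of_real (Re (Xi (\<lambda>_. 0) l m $ i $ j))"
  using Xi0_real_aux[of "\<lambda>_. 0" l m i j] by (simp add: Reals_cases complex_eq_iff)


definition hh :: "nat \<Rightarrow> nat \<Rightarrow> 2 \<Rightarrow> 2 \<Rightarrow> real" where
  "hh l m i j = Re (Xi (\<lambda>_. 0) l m $ i $ j)"
definition Acoef :: "nat \<Rightarrow> nat \<Rightarrow> real" where
  "Acoef l m = ((hh l m 1 1)^2 + (hh l m 1 2)^2)/2 + ((hh l m 2 1)^2 + (hh l m 2 2)^2)/2"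
definition Bcoef :: "nat \<Rightarrow> nat \<Rightarrow> real" where
  "Bcoef l m = hh l m 1 1 * hh l m 1 2 + hh l m 2 1 * hh l m 2 2"

lemma key: "(norm (Xi \<omega> l m *v phi_star))\<^sup>2 = Acoef l m + Bcoef l m * sin (\<omega> 0)"
proof -
  let ?t = "\<omega> 0"
  let ?v = "vec2 (1/sqrt 2) (cis (- ?t) * (\<i> / sqrt 2))"
  have G: "dg 1 (cis (- ?t)) *v phi_star = ?v"
    by (simp add: dg_def phi_star_def mat2_vec)
  have H: "Xi (\<lambda>_. 0) l m = mat2 (of_real (hh l m 1 1)) (of_real (hh l m 1 2)) (of_real (hh l m 2 1)) (of_real (hh l m 2 2))"
    unfolding hh_def by (subst mat2_eta) (simp only: Xi0_real[symmetric])
  define u1 where "u1 = complex_of_real (hh l m 1 1) * (1/sqrt 2) + complex_of_real (hh l m 1 2) * (cis (- ?t) * (\<i> / sqrt 2))"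
  define u2 where "u2 = complex_of_real (hh l m 2 1) * (1/sqrt 2) + complex_of_real (hh l m 2 2) * (cis (- ?t) * (\<i> / sqrt 2))"
  have HV: "Xi (\<lambda>_. 0) l m *v ?v = vec2 u1 u2"
    unfolding H mat2_vec u1_def u2_def ..
  have "Xi \<omega> l m *v phi_star = Dm \<omega> (- int l + int m) *v (Xi (\<lambda>_. 0) l m *v (dg 1 (cis (- ?t)) *v phi_star))"
    by (subst gauge) (simp add: matrix_vector_mul_assoc matrix_mul_assoc)
  also have "\<dots> = Dm \<omega> (- int l + int m) *v vec2 u1 u2" unfolding G HV ..
  finally have e: "Xi \<omega> l m *v phi_star = Dm \<omega> (- int l + int m) *v vec2 u1 u2" .
  have "(norm (Xi \<omega> l m *v phi_star))\<^sup>2 = (cmod u1)^2 + (cmod u2)^2"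
    unfolding e Dm_def dg_def mat2_vec norm_vec2 by (simp add: norm_mult)
  also have "\<dots> = Acoef l m + Bcoef l m * sin ?t"
    unfolding u1_def u2_def cm_calc Acoef_def Bcoef_def by (simp add: algebra_simps)
  finally show ?thesis .
qed



lemma qp_form: "quenched_prob \<omega> n x =
  (if \<exists>l m. l + m = n \<and> x = - int l + int m
   then Acoef (nat ((int n - x) div 2)) (nat ((int n + x) div 2)) + Bcoef (nat ((int n - x) div 2)) (nat ((int n + x) div 2)) * sin (\<omega> 0)
   else 0)"
  unfolding quenched_prob_def key ..

theorem mainTheorem7:
  fixes Pbar :: "int \<Rightarrow> real measure"
  assumes prob: "\<And>x. prob_space (Pbar x)"
    and borel: "\<And>x. sets (Pbar x) = sets borel"
    and symm: "distr (Pbar 0) borel uminus = Pbar 0"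
  shows "\<forall>(n::nat) (x::int).
           (\<integral>\<omega>. quenched_prob \<omega> n x \<partial>(PiM UNIV Pbar)) = quenched_prob (\<lambda>_. 0) n x"
proof (intro allI)
  fix n :: nat and x :: int
  let ?M = "PiM UNIV Pbar"
  interpret P: prob_space ?M by (rule prob_space_PiM) (use prob in auto)
  have sinB: "sin \<in> borel_measurable (Pbar 0)"
    unfolding measurable_cong_sets[OF borel[of 0] refl] by measurable
  have comp: "(\<lambda>\<omega>. \<omega> 0) \<in> measurable ?M (Pbar 0)"
    by (rule measurable_component_singleton) simp
  have sm: "(\<lambda>\<omega>. sin (\<omega> (0::int))) \<in> borel_measurable ?M"
    using measurable_comp[OF comp sinB] by (simp add: o_def)
  have int_sin: "integrable ?M (\<lambda>\<omega>. sin (\<omega> (0::int)))"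
    by (rule P.integrable_const_bound[where B=1]) (auto intro: sm)
  have "(\<integral>\<omega>. sin (\<omega> 0) \<partial>?M) = (\<integral>t. sin t \<partial>(distr ?M (Pbar 0) (\<lambda>\<omega>. \<omega> 0)))"
    by (rule integral_distr[symmetric, OF comp sinB])
  also have "\<dots> = (\<integral>t. sin t \<partial>Pbar 0)"
    by (subst distr_PiM_component) (use prob in auto)
  finally have s1: "(\<integral>\<omega>. sin (\<omega> 0) \<partial>?M) = (\<integral>t. sin t \<partial>Pbar 0)" .
  have "(\<integral>t. sin t \<partial>Pbar 0) = (\<integral>t. sin t \<partial>distr (Pbar 0) borel uminus)"
    using symm by simp
  also have "\<dots> = (\<integral>t. sin (- t) \<partial>Pbar 0)"
    by (rule integral_distr) (unfold measurable_cong_sets[OF borel[of 0] refl], measurable)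
  also have "\<dots> = - (\<integral>t. sin t \<partial>Pbar 0)" by simp
  finally have s2: "(\<integral>t. sin t \<partial>Pbar 0) = 0" by simp
  have zero: "(\<integral>\<omega>. sin (\<omega> 0) \<partial>?M) = 0" using s1 s2 by simp
  show "(\<integral>\<omega>. quenched_prob \<omega> n x \<partial>?M) = quenched_prob (\<lambda>_. 0) n x"
  proof (cases "\<exists>l m. l + m = n \<and> x = - int l + int m")
    case True then show ?thesis unfolding qp_form by (simp add: zero int_sin P.prob_space)
  next
    case False then show ?thesis unfolding qp_form by (simp only: if_False integral_zero)
  qed
qed

end
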